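(* Let $\mathcal M_1=((X_1,\mathcal N_1),\mathcal I,V_1)$ and $\mathcal M_2=((X_2,\mathcal N_2),\mathcal I,V_2)$ be neighbourhood models over the same index space and $(Z_{\mathcal N},Z_1,Z_2)$ a path preserving bisimulation between them. If $x_1\,Z_{\mathcal N}\,x_2$, then for every SLCS formula $\varphi$: $\mathcal M_1,x_1\models\varphi$ if and only if $\mathcal M_2,x_2\models\varphi$.
   Context: A filter on a set $X$ is a family $F\subseteq\mathcal P(X)$ closed under finite intersections and supersets, with $\emptyset\notin F$. A neighbourhood space $(X,\mathcal N)$ assigns to each $x\in X$ a filter $\mathcal N(x)$ on $X$ such that $x\in N$ for all $N\in\mathcal N(x)$; elements of $\mathcal N(x)$ are neighbourhoods of $x$. The closure of $A\subseteq X$ is $\mathcal C(A)=\{x\in X\mid \forall N\in\mathcal N(x): A\cap N\neq\emptyset\}$. Subsets $U,V$ are semi-separated if $\mathcal C(U)\cap V=U\cap\mathcal C(V)=\emptyset$; a set is connected if it is not the union of two non-empty semi-separated sets. A function $f:X_1\to X_2$ between neighbourhood spaces is continuous if for every $x\in X_1$ and every $N_2\in\mathcal N_2(f(x))$ we have $f^{-1}[N_2]\in\mathcal N_1(x)$. An index space $\mathcal I=(I,\mathcal N_I,\le,0)$ is a connected neighbourhood space $(I,\mathcal N_I)$ with a linear order $\le$ whose least element is $0$. A path on a neighbourhood space $X$ is a continuous map $p:I\to X$; we write $p:x\rightsquigarrow\infty$ if $p(0)=x$. A neighbourhood model $\mathcal M=((X,\mathcal N),\mathcal I,V)$ consists of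 a neighbourhood space, an index space and a valuation $V:X\to\mathcal P(\mathsf{P})$ for a fixed countable set $\mathsf P$ of propositional atoms; paths on $\mathcal M$ are paths with respect to $\mathcal I$. SLCS formulas: $\varphi::=a\mid\top\mid\neg\varphi\mid\varphi\wedge\varphi\mid\mathcal N\varphi\mid\varphi\,\mathcal R\,\varphi\mid\varphi\,\mathcal P\,\varphi$ with $a\in\mathsf P$. Semantics: $\mathcal M,x\models a$ iff $a\in V(x)$; Booleans as usual; $\mathcal M,x\models\mathcal N\varphi$ iff $x\in\mathcal C(\{y\mid\mathcal M,y\models\varphi\})$; $\mathcal M,x\models\varphi\,\mathcal R\,\psi$ iff there are a path $p$ and $n\in I$ with $p(n)=x$, $\mathcal M,p(0)\models\psi$ and $\mathcal M,p(i)\models\varphi$ for all $0<i\le n$; $\mathcal M,x\models\varphi\,\mathcal P\,\psi$ iff there are a path $p$ with $p(0)=x$ and $n\in I$ with $\mathcal M,p(n)\models\psi$ and $\mathcal M,p(i)\models\varphi$ for all $0\le i<n$. A relation $Z\subseteq X_1\times X_2$ between neighbourhood models satisfies the neighbourhood bisimulation conditions at a pair $x_1\,Z\,x_2$ if: (atomic) $V_1(x_1)=V_2(x_2)$; (forth) for every $N_2\in\mathcal N_2(x_2)$ there is $N_1\in\mathcal N_1(x_1)$ such that every $y_1\in N_1$ has some $y_2\in N_2$ with $y_1Zy_2$; (back) for every $N_1\in\mathcal N_1(x_1)$ there is $N_2\in\mathcal N_2(x_2)$ such that every $y_2\in N_2$ has some $y_1\in N_1$ with $y_1Zy_2$. $Z$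 is a neighbourhood bisimulation if these hold at every related pair. Path preserving bisimulation: let $\mathcal M_1,\mathcal M_2$ be neighbourhood models over the same index space $\mathcal I$, with $\mathcal P_1,\mathcal P_2$ their sets of paths. A triple $(Z_{\mathcal N},Z_1,Z_2)$ with $\emptyset\neq Z_{\mathcal N}\subseteq X_1\times X_2$, $Z_1\subseteq(\mathcal P_1\times I)\times(\mathcal P_2\times I)$, $Z_2\subseteq(\mathcal P_2\times I)\times(\mathcal P_1\times I)$ is a path preserving bisimulation if for all $x_1,x_2$, paths $p,q$ and indices: (1) $Z_{\mathcal N}$ is a neighbourhood bisimulation; (2) if $x_1Z_{\mathcal N}x_2$, $p:x_1\rightsquigarrow\infty$, $n\neq0$, then there are $q:x_2\rightsquigarrow\infty$ and $m$ with $p(n)Z_{\mathcal N}q(m)$ and $(p,n)Z_1(q,m)$; (3) if $x_1Z_{\mathcal N}x_2$, $p$ a path with $p(n)=x_1$, $n\neq0$, then there are a path $q$ and $m$ with $q(m)=x_2$, $p(0)Z_{\mathcal N}q(0)$ and $(p,n)Z_1(q,m)$; (4) if $(p,n)Z_1(q,m)$ and $0<k_q<m$, then there is $k_p$ with $0<k_p<n$ and $p(k_p)Z_{\mathcal N}q(k_q)$; (5) if $x_1Z_{\mathcal N}x_2$, $q:x_2\rightsquigarrow\infty$, $m\neq0$, then there are $p:x_1\rightsquigarrow\infty$ and $n$ with $p(n)Z_{\mathcal N}q(m)$ and $(q,m)Z_2(p,n)$; (6) if $x_1Z_{\mathcal N}x_2$, $q$ a path with $q(m)=x_2$, $m\neq0$,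 then there are a path $p$ and $n$ with $p(n)=x_1$, $p(0)Z_{\mathcal N}q(0)$ and $(q,m)Z_2(p,n)$; (7) if $(q,m)Z_2(p,n)$ and $0<k_p<n$, then there is $k_q$ with $0<k_q<m$ and $p(k_p)Z_{\mathcal N}q(k_q)$. *)

theory Defs
  imports Main "HOL-Library.Countable"
begin

text \<open>Carriers are whole types: X = UNIV :: 'a, I = UNIV :: 'i.\<close>

definition is_filter :: "'a set set \<Rightarrow> bool" where
  "is_filter F \<longleftrightarrow> UNIV \<in> F \<and> (\<forall>A\<in>F. \<forall>B\<in>F. A \<inter> B \<in> F)
     \<and> (\<forall>A\<in>F. \<forall>B. A \<subseteq> B \<longrightarrow> B \<in> F) \<and> {} \<notin> F"

definition nbhd_space :: "('a \<Rightarrow> 'a set set) \<Rightarrow> bool" where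
  "nbhd_space N \<longleftrightarrow> (\<forall>x. is_filter (N x) \<and> (\<forall>M\<in>N x. x \<in> M))"

definition ncl :: "('a \<Rightarrow> 'a set set) \<Rightarrow> 'a set \<Rightarrow> 'a set" where
  "ncl N A = {x. \<forall>M\<in>N x. A \<inter> M \<noteq> {}}"

definition semi_separated :: "('a \<Rightarrow> 'a set set) \<Rightarrow> 'a set \<Rightarrow> 'a set \<Rightarrow> bool" where
  "semi_separated N U V \<longleftrightarrow> ncl N U \<inter> V = {} \<and> U \<inter> ncl N V = {}"

definition nconnected :: "('a \<Rightarrow> 'a set set) \<Rightarrow> 'a set \<Rightarrow> bool" where
  "nconnected N S \<longleftrightarrow> \<not> (\<exists>U V. U \<noteq> {} \<and> V \<noteq> {} \<and> S = U \<union> V \<and> semi_separated N U V)"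

definition ncontinuous :: "('a \<Rightarrow> 'a set set) \<Rightarrow> ('b \<Rightarrow> 'b set set) \<Rightarrow> ('a \<Rightarrow> 'b) \<Rightarrow> bool" where
  "ncontinuous N1 N2 f \<longleftrightarrow> (\<forall>x. \<forall>M\<in>N2 (f x). f -` M \<in> N1 x)"

definition index_space :: "('i \<Rightarrow> 'i set set) \<Rightarrow> ('i \<Rightarrow> 'i \<Rightarrow> bool) \<Rightarrow> 'i \<Rightarrow> bool" where
  "index_space NI le z \<longleftrightarrow> nbhd_space NI \<and> nconnected NI UNIV
     \<and> (\<forall>i. le i i) \<and> (\<forall>i j k. le i j \<longrightarrow> le j k \<longrightarrow> le i k)
     \<and> (\<forall>i j. le i j \<longrightarrow> le j i \<longrightarrow> i = j) \<and> (\<forall>i j. le i j \<or> le j i)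
     \<and> (\<forall>i. le z i)"

definition lt :: "('i \<Rightarrow> 'i \<Rightarrow> bool) \<Rightarrow> 'i \<Rightarrow> 'i \<Rightarrow> bool" where
  "lt le i j \<longleftrightarrow> le i j \<and> i \<noteq> j"

definition paths :: "('i \<Rightarrow> 'i set set) \<Rightarrow> ('a \<Rightarrow> 'a set set) \<Rightarrow> ('i \<Rightarrow> 'a) set" where
  "paths NI N = {p. ncontinuous NI N p}"

datatype 'p form = Atom 'p | Top | Neg "'p form" | And "'p form" "'p form"
  | Near "'p form" | Reach "'p form" "'p form" | Pass "'p form" "'p form"

fun sat :: "('a \<Rightarrow> 'a set set) \<Rightarrow> ('i \<Rightarrow> 'i set set) \<Rightarrow> ('i \<Rightarrow> 'i \<Rightarrow> bool) \<Rightarrow> 'i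
             \<Rightarrow> ('a \<Rightarrow> 'p set) \<Rightarrow> 'a \<Rightarrow> 'p form \<Rightarrow> bool" where
  "sat N NI le z V x (Atom a) = (a \<in> V x)"
| "sat N NI le z V x Top = True"
| "sat N NI le z V x (Neg f) = (\<not> sat N NI le z V x f)"
| "sat N NI le z V x (And f g) = (sat N NI le z V x f \<and> sat N NI le z V x g)"
| "sat N NI le z V x (Near f) = (x \<in> ncl N {y. sat N NI le z V y f})"
| "sat N NI le z V x (Reach f g) = (\<exists>p\<in>paths NI N. \<exists>n. p n = x \<and> sat N NI le z V (p z) g
      \<and> (\<forall>i. lt le z i \<and> le i n \<longrightarrow> sat N NI le z V (p i) f))"
| "sat N NI le z V x (Pass f g) = (\<exists>p\<in>paths NI N. p z = x \<and> (\<exists>n. sat N NI le z V (p n) g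
      \<and> (\<forall>i. le z i \<and> lt le i n \<longrightarrow> sat N NI le z V (p i) f)))"

definition nbhd_bisim_at :: "('a \<Rightarrow> 'a set set) \<Rightarrow> ('a \<Rightarrow> 'p set) \<Rightarrow> ('b \<Rightarrow> 'b set set)
   \<Rightarrow> ('b \<Rightarrow> 'p set) \<Rightarrow> ('a \<times> 'b) set \<Rightarrow> 'a \<Rightarrow> 'b \<Rightarrow> bool" where
  "nbhd_bisim_at N1 V1 N2 V2 Z x1 x2 \<longleftrightarrow> V1 x1 = V2 x2
     \<and> (\<forall>M2\<in>N2 x2. \<exists>M1\<in>N1 x1. \<forall>y1\<in>M1. \<exists>y2\<in>M2. (y1, y2) \<in> Z)
     \<and> (\<forall>M1\<in>N1 x1. \<exists>M2\<in>N2 x2. \<forall>y2\<in>M2. \<exists>y1\<in>M1. (y1, y2) \<in> Z)"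

definition nbhd_bisim :: "('a \<Rightarrow> 'a set set) \<Rightarrow> ('a \<Rightarrow> 'p set) \<Rightarrow> ('b \<Rightarrow> 'b set set)
   \<Rightarrow> ('b \<Rightarrow> 'p set) \<Rightarrow> ('a \<times> 'b) set \<Rightarrow> bool" where
  "nbhd_bisim N1 V1 N2 V2 Z \<longleftrightarrow> (\<forall>(x1, x2)\<in>Z. nbhd_bisim_at N1 V1 N2 V2 Z x1 x2)"

definition path_pres_bisim ::
  "('a \<Rightarrow> 'a set set) \<Rightarrow> ('a \<Rightarrow> 'p set) \<Rightarrow> ('b \<Rightarrow> 'b set set) \<Rightarrow> ('b \<Rightarrow> 'p set)
   \<Rightarrow> ('i \<Rightarrow> 'i set set) \<Rightarrow> ('i \<Rightarrow> 'i \<Rightarrow> bool) \<Rightarrow> 'i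
   \<Rightarrow> ('a \<times> 'b) set \<Rightarrow> ((('i \<Rightarrow> 'a) \<times> 'i) \<times> (('i \<Rightarrow> 'b) \<times> 'i)) set
   \<Rightarrow> ((('i \<Rightarrow> 'b) \<times> 'i) \<times> (('i \<Rightarrow> 'a) \<times> 'i)) set \<Rightarrow> bool" where
  "path_pres_bisim N1 V1 N2 V2 NI le z ZN Z1 Z2 \<longleftrightarrow>
     ZN \<noteq> {}
   \<and> Z1 \<subseteq> (paths NI N1 \<times> UNIV) \<times> (paths NI N2 \<times> UNIV)
   \<and> Z2 \<subseteq> (paths NI N2 \<times> UNIV) \<times> (paths NI N1 \<times> UNIV)
   \<comment> \<open>(1)\<close>
   \<and> nbhd_bisim N1 V1 N2 V2 ZN
   \<comment> \<open>(2)\<close>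
   \<and> (\<forall>x1 x2 p n. (x1, x2) \<in> ZN \<and> p \<in> paths NI N1 \<and> p z = x1 \<and> n \<noteq> z \<longrightarrow>
        (\<exists>q\<in>paths NI N2. \<exists>m. q z = x2 \<and> (p n, q m) \<in> ZN \<and> ((p, n), (q, m)) \<in> Z1))
   \<comment> \<open>(3)\<close>
   \<and> (\<forall>x1 x2 p n. (x1, x2) \<in> ZN \<and> p \<in> paths NI N1 \<and> p n = x1 \<and> n \<noteq> z \<longrightarrow>
        (\<exists>q\<in>paths NI N2. \<exists>m. q m = x2 \<and> (p z, q z) \<in> ZN \<and> ((p, n), (q, m)) \<in> Z1))
   \<comment> \<open>(4)\<close>
   \<and> (\<forall>p n q m kq. ((p, n), (q, m)) \<in> Z1 \<and> lt le z kq \<and> lt le kq m \<longrightarrow>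
        (\<exists>kp. lt le z kp \<and> lt le kp n \<and> (p kp, q kq) \<in> ZN))
   \<comment> \<open>(5)\<close>
   \<and> (\<forall>x1 x2 q m. (x1, x2) \<in> ZN \<and> q \<in> paths NI N2 \<and> q z = x2 \<and> m \<noteq> z \<longrightarrow>
        (\<exists>p\<in>paths NI N1. \<exists>n. p z = x1 \<and> (p n, q m) \<in> ZN \<and> ((q, m), (p, n)) \<in> Z2))
   \<comment> \<open>(6)\<close>
   \<and> (\<forall>x1 x2 q m. (x1, x2) \<in> ZN \<and> q \<in> paths NI N2 \<and> q m = x2 \<and> m \<noteq> z \<longrightarrow>
        (\<exists>p\<in>paths NI N1. \<exists>n. p n = x1 \<and> (p z, q z) \<in> ZN \<and> ((q, m), (p, n)) \<in> Z2))
   \<comment> \<open>(7)\<close>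
   \<and> (\<forall>q m p n kp. ((q, m), (p, n)) \<in> Z2 \<and> lt le z kp \<and> lt le kp n \<longrightarrow>
        (\<exists>kq. lt le z kq \<and> lt le kq m \<and> (p kp, q kq) \<in> ZN))"

end

theory Submission
  imports Defs
begin

lemma const_path:
  assumes "nbhd_space NI" "nbhd_space N"
  shows "(\<lambda>_. c) \<in> paths NI N"
  using assms unfolding paths_def ncontinuous_def nbhd_space_def is_filter_def by auto

lemma ppb2: "path_pres_bisim N1 V1 N2 V2 NI le z ZN Z1 Z2 \<Longrightarrow> (\<forall>x1 x2 p n. (x1, x2) \<in> ZN \<and> p \<in> paths NI N1 \<and> p z = x1 \<and> n \<noteq> z \<longrightarrow>
        (\<exists>q\<in>paths NI N2. \<exists>m. q z = x2 \<and> (p n, q m) \<in> ZN \<and> ((p, n), (q, m)) \<in> Z1))"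
  unfolding path_pres_bisim_def by (elim conjE) assumption
lemma ppb3: "path_pres_bisim N1 V1 N2 V2 NI le z ZN Z1 Z2 \<Longrightarrow> (\<forall>x1 x2 p n. (x1, x2) \<in> ZN \<and> p \<in> paths NI N1 \<and> p n = x1 \<and> n \<noteq> z \<longrightarrow>
        (\<exists>q\<in>paths NI N2. \<exists>m. q m = x2 \<and> (p z, q z) \<in> ZN \<and> ((p, n), (q, m)) \<in> Z1))"
  unfolding path_pres_bisim_def by (elim conjE) assumption
lemma ppb4: "path_pres_bisim N1 V1 N2 V2 NI le z ZN Z1 Z2 \<Longrightarrow> (\<forall>p n q m kq. ((p, n), (q, m)) \<in> Z1 \<and> lt le z kq \<and> lt le kq m \<longrightarrow>
        (\<exists>kp. lt le z kp \<and> lt le kp n \<and> (p kp, q kq) \<in> ZN))"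
  unfolding path_pres_bisim_def by (elim conjE) assumption
lemma ppb5: "path_pres_bisim N1 V1 N2 V2 NI le z ZN Z1 Z2 \<Longrightarrow> (\<forall>x1 x2 q m. (x1, x2) \<in> ZN \<and> q \<in> paths NI N2 \<and> q z = x2 \<and> m \<noteq> z \<longrightarrow>
        (\<exists>p\<in>paths NI N1. \<exists>n. p z = x1 \<and> (p n, q m) \<in> ZN \<and> ((q, m), (p, n)) \<in> Z2))"
  unfolding path_pres_bisim_def by (elim conjE) assumption
lemma ppb6: "path_pres_bisim N1 V1 N2 V2 NI le z ZN Z1 Z2 \<Longrightarrow> (\<forall>x1 x2 q m. (x1, x2) \<in> ZN \<and> q \<in> paths NI N2 \<and> q m = x2 \<and> m \<noteq> z \<longrightarrow>
        (\<exists>p\<in>paths NI N1. \<exists>n. p n = x1 \<and> (p z, q z) \<in> ZN \<and> ((q, m), (p, n)) \<in> Z2))"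
  unfolding path_pres_bisim_def by (elim conjE) assumption
lemma ppb7: "path_pres_bisim N1 V1 N2 V2 NI le z ZN Z1 Z2 \<Longrightarrow> (\<forall>q m p n kp. ((q, m), (p, n)) \<in> Z2 \<and> lt le z kp \<and> lt le kp n \<longrightarrow>
        (\<exists>kq. lt le z kq \<and> lt le kq m \<and> (p kp, q kq) \<in> ZN))"
  unfolding path_pres_bisim_def by (elim conjE) assumption

lemma main:
  fixes N1 :: "'a \<Rightarrow> 'a set set" and V1 :: "'a \<Rightarrow> 'p set"
    and N2 :: "'b \<Rightarrow> 'b set set" and V2 :: "'b \<Rightarrow> 'p set"
    and NI :: "'i \<Rightarrow> 'i set set" and le :: "'i \<Rightarrow> 'i \<Rightarrow> bool" and z :: 'i
    and ZN :: "('a \<times> 'b) set"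
    and Z1 :: "((('i \<Rightarrow> 'a) \<times> 'i) \<times> (('i \<Rightarrow> 'b) \<times> 'i)) set"
    and Z2 :: "((('i \<Rightarrow> 'b) \<times> 'i) \<times> (('i \<Rightarrow> 'a) \<times> 'i)) set"
  assumes N1S: "nbhd_space N1" and N2S: "nbhd_space N2" and IS: "index_space NI le z"
    and B: "path_pres_bisim N1 V1 N2 V2 NI le z ZN Z1 Z2"
  shows "\<forall>x1 x2. (x1, x2) \<in> ZN \<longrightarrow> (sat N1 NI le z V1 x1 \<phi> \<longleftrightarrow> sat N2 NI le z V2 x2 \<phi>)"
proof (induction \<phi>)
  have NS: "nbhd_space NI" and refl: "\<And>i. le i i" and antis: "\<And>i j. le i j \<Longrightarrow> le j i \<Longrightarrow> i = j"
    and lez: "\<And>i. le z i"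
    using IS unfolding index_space_def by auto
  have NB: "nbhd_bisim N1 V1 N2 V2 ZN" using B unfolding path_pres_bisim_def by blast
  case (Atom a)
  then show ?case using NB unfolding nbhd_bisim_def nbhd_bisim_at_def by auto
next
  case Top then show ?case by simp
next
  case (Neg f) then show ?case by simp
next
  case (And f g) then show ?case by simp
next
  case (Near f)
  have NB: "nbhd_bisim N1 V1 N2 V2 ZN" using B unfolding path_pres_bisim_def by blast
  show ?case
  proof (intro allI impI)
    fix x1 x2 assume r: "(x1, x2) \<in> ZN"
    then have bat: "nbhd_bisim_at N1 V1 N2 V2 ZN x1 x2" using NB unfolding nbhd_bisim_def by auto
    show "sat N1 NI le z V1 x1 (Near f) = sat N2 NI le z V2 x2 (Near f)"
    proof
      assume "sat N1 NI le z V1 x1 (Near f)"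
      then have h: "\<forall>M\<in>N1 x1. {y. sat N1 NI le z V1 y f} \<inter> M \<noteq> {}" by (simp add: ncl_def)
      show "sat N2 NI le z V2 x2 (Near f)"
        unfolding sat.simps ncl_def
      proof (intro CollectI ballI)
        fix M2 assume "M2 \<in> N2 x2"
        then obtain M1 where "M1 \<in> N1 x1" and m: "\<forall>y1\<in>M1. \<exists>y2\<in>M2. (y1, y2) \<in> ZN"
          using bat unfolding nbhd_bisim_at_def by blast
        then obtain y1 where "y1 \<in> M1" "sat N1 NI le z V1 y1 f" using h by blast
        then obtain y2 where "y2 \<in> M2" "(y1, y2) \<in> ZN" using m by blast
        then show "{y. sat N2 NI le z V2 y f} \<inter> M2 \<noteq> {}"
          using Near \<open>sat N1 NI le z V1 y1 f\<close> by blast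
      qed
    next
      assume "sat N2 NI le z V2 x2 (Near f)"
      then have h: "\<forall>M\<in>N2 x2. {y. sat N2 NI le z V2 y f} \<inter> M \<noteq> {}" by (simp add: ncl_def)
      show "sat N1 NI le z V1 x1 (Near f)"
        unfolding sat.simps ncl_def
      proof (intro CollectI ballI)
        fix M1 assume "M1 \<in> N1 x1"
        then obtain M2 where "M2 \<in> N2 x2" and m: "\<forall>y2\<in>M2. \<exists>y1\<in>M1. (y1, y2) \<in> ZN"
          using bat unfolding nbhd_bisim_at_def by blast
        then obtain y2 where "y2 \<in> M2" "sat N2 NI le z V2 y2 f" using h by blast
        then obtain y1 where "y1 \<in> M1" "(y1, y2) \<in> ZN" using m by blast
        then show "{y. sat N1 NI le z V1 y f} \<inter> M1 \<noteq> {}"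
          using Near \<open>sat N2 NI le z V2 y2 f\<close> by blast
      qed
    qed
  qed
next
  case (Reach f g)
  have NS: "nbhd_space NI" and antis: "\<And>i j. le i j \<Longrightarrow> le j i \<Longrightarrow> i = j"
    and lez: "\<And>i. le z i" and refl: "\<And>i. le i i"
    using IS unfolding index_space_def by auto
  note c3=ppb3[OF B, rule_format, unfolded conj_imp_eq_imp_imp] and c4=ppb4[OF B, rule_format, unfolded conj_imp_eq_imp_imp] and c6=ppb6[OF B, rule_format, unfolded conj_imp_eq_imp_imp] and c7=ppb7[OF B, rule_format, unfolded conj_imp_eq_imp_imp]
  show ?case
  proof (intro allI impI)
    fix x1 x2 assume r: "(x1, x2) \<in> ZN"
    show "sat N1 NI le z V1 x1 (Reach f g) = sat N2 NI le z V2 x2 (Reach f g)"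
    proof
      assume "sat N1 NI le z V1 x1 (Reach f g)"
      then obtain p n where p: "p \<in> paths NI N1" "p n = x1" "sat N1 NI le z V1 (p z) g"
        and pf: "\<forall>i. lt le z i \<and> le i n \<longrightarrow> sat N1 NI le z V1 (p i) f" by auto
      show "sat N2 NI le z V2 x2 (Reach f g)"
      proof (cases "n = z")
        case True
        then have "sat N2 NI le z V2 x2 g" using p r Reach.IH(2) by auto
        moreover have "\<forall>i. \<not> (lt le z i \<and> le i z)" "\<forall>i. \<not> (le z i \<and> lt le i z)" using antis unfolding lt_def by blast+
        ultimately show ?thesis unfolding sat.simps
          apply -
          apply (rule bexI[of _ "\<lambda>_. x2"])
           apply (rule exI[of _ z])
           apply blast
          apply (rule const_path[OF NS N2S])
          done
      next
        case False
        then obtain q m where q: "q \<in> paths NI N2" "q m = x2" "(p z, q z) \<in> ZN" "((p, n), (q, m)) \<in> Z1"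
          using c3[OF r p(1,2)] by blast
        have x1f: "sat N1 NI le z V1 x1 f" using pf p(2) False lez refl unfolding lt_def by metis
        have "\<forall>i. lt le z i \<and> le i m \<longrightarrow> sat N2 NI le z V2 (q i) f"
        proof (intro allI impI)
          fix i assume i: "lt le z i \<and> le i m"
          show "sat N2 NI le z V2 (q i) f"
          proof (cases "i = m")
            case True then show ?thesis using x1f q r Reach.IH(1) by auto
          next
            case False
            then obtain kp where "lt le z kp" "lt le kp n" "(p kp, q i) \<in> ZN"
              using c4[OF q(4)] i unfolding lt_def by blast
            then show ?thesis using pf Reach.IH(1) unfolding lt_def by blast
          qed
        qed
        then show ?thesis using q p Reach.IH(2) r unfolding sat.simps by blast
      qed
    next
      assume "sat N2 NI le z V2 x2 (Reach f g)"
      then obtain q m where q: "q \<in> paths NI N2" "q m = x2" "sat N2 NI le z V2 (q z) g"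
        and qf: "\<forall>i. lt le z i \<and> le i m \<longrightarrow> sat N2 NI le z V2 (q i) f" by auto
      show "sat N1 NI le z V1 x1 (Reach f g)"
      proof (cases "m = z")
        case True
        then have "sat N1 NI le z V1 x1 g" using q r Reach.IH(2) by auto
        moreover have "\<forall>i. \<not> (lt le z i \<and> le i z)" "\<forall>i. \<not> (le z i \<and> lt le i z)" using antis unfolding lt_def by blast+
        ultimately show ?thesis unfolding sat.simps
          apply -
          apply (rule bexI[of _ "\<lambda>_. x1"])
           apply (rule exI[of _ z])
           apply blast
          apply (rule const_path[OF NS N1S])
          done
      next
        case False
        then obtain p n where p: "p \<in> paths NI N1" "p n = x1" "(p z, q z) \<in> ZN" "((q, m), (p, n)) \<in> Z2"
          using c6[OF r q(1,2)] by blast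
        have x2f: "sat N2 NI le z V2 x2 f" using qf q(2) False lez refl unfolding lt_def by metis
        have "\<forall>i. lt le z i \<and> le i n \<longrightarrow> sat N1 NI le z V1 (p i) f"
        proof (intro allI impI)
          fix i assume i: "lt le z i \<and> le i n"
          show "sat N1 NI le z V1 (p i) f"
          proof (cases "i = n")
            case True then show ?thesis using x2f p r Reach.IH(1) by auto
          next
            case False
            then obtain kq where "lt le z kq" "lt le kq m" "(p i, q kq) \<in> ZN"
              using c7[OF p(4)] i unfolding lt_def by blast
            then show ?thesis using qf Reach.IH(1) unfolding lt_def by blast
          qed
        qed
        then show ?thesis using q p Reach.IH(2) r unfolding sat.simps by blast
      qed
    qed
  qed
next
  case (Pass f g)
  have NS: "nbhd_space NI" and antis: "\<And>i j. le i j \<Longrightarrow> le j i \<Longrightarrow> i = j"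
    and lez: "\<And>i. le z i" and refl: "\<And>i. le i i"
    using IS unfolding index_space_def by auto
  note c2=ppb2[OF B, rule_format, unfolded conj_imp_eq_imp_imp] and c4=ppb4[OF B, rule_format, unfolded conj_imp_eq_imp_imp] and c5=ppb5[OF B, rule_format, unfolded conj_imp_eq_imp_imp] and c7=ppb7[OF B, rule_format, unfolded conj_imp_eq_imp_imp]
  show ?case
  proof (intro allI impI)
    fix x1 x2 assume r: "(x1, x2) \<in> ZN"
    show "sat N1 NI le z V1 x1 (Pass f g) = sat N2 NI le z V2 x2 (Pass f g)"
    proof
      assume "sat N1 NI le z V1 x1 (Pass f g)"
      then obtain p n where p: "p \<in> paths NI N1" "p z = x1" "sat N1 NI le z V1 (p n) g"
        and pf: "\<forall>i. le z i \<and> lt le i n \<longrightarrow> sat N1 NI le z V1 (p i) f" by auto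
      show "sat N2 NI le z V2 x2 (Pass f g)"
      proof (cases "n = z")
        case True
        then have "sat N2 NI le z V2 x2 g" using p r Pass.IH(2) by auto
        moreover have "\<forall>i. \<not> (lt le z i \<and> le i z)" "\<forall>i. \<not> (le z i \<and> lt le i z)" using antis unfolding lt_def by blast+
        ultimately show ?thesis unfolding sat.simps
          apply -
          apply (rule bexI[of _ "\<lambda>_. x2"])
           apply (rule conjI, simp, rule exI[of _ z])
           apply blast
          apply (rule const_path[OF NS N2S])
          done
      next
        case False
        then obtain q m where q: "q \<in> paths NI N2" "q z = x2" "(p n, q m) \<in> ZN" "((p, n), (q, m)) \<in> Z1"
          using c2[OF r p(1,2)] by blast
        have x1f: "sat N1 NI le z V1 x1 f" using pf p(2) False lez unfolding lt_def by metis
        have "\<forall>i. le z i \<and> lt le i m \<longrightarrow> sat N2 NI le z V2 (q i) f"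
        proof (intro allI impI)
          fix i assume i: "le z i \<and> lt le i m"
          show "sat N2 NI le z V2 (q i) f"
          proof (cases "i = z")
            case True then show ?thesis using x1f q r Pass.IH(1) by auto
          next
            case False
            then obtain kp where "lt le z kp" "lt le kp n" "(p kp, q i) \<in> ZN"
              using c4[OF q(4)] i unfolding lt_def by blast
            then show ?thesis using pf Pass.IH(1) unfolding lt_def by blast
          qed
        qed
        then show ?thesis using q p Pass.IH(2) r unfolding sat.simps by blast
      qed
    next
      assume "sat N2 NI le z V2 x2 (Pass f g)"
      then obtain q m where q: "q \<in> paths NI N2" "q z = x2" "sat N2 NI le z V2 (q m) g"
        and qf: "\<forall>i. le z i \<and> lt le i m \<longrightarrow> sat N2 NI le z V2 (q i) f" by auto
      show "sat N1 NI le z V1 x1 (Pass f g)"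
      proof (cases "m = z")
        case True
        then have "sat N1 NI le z V1 x1 g" using q r Pass.IH(2) by auto
        moreover have "\<forall>i. \<not> (lt le z i \<and> le i z)" "\<forall>i. \<not> (le z i \<and> lt le i z)" using antis unfolding lt_def by blast+
        ultimately show ?thesis unfolding sat.simps
          apply -
          apply (rule bexI[of _ "\<lambda>_. x1"])
           apply (rule conjI, simp, rule exI[of _ z])
           apply blast
          apply (rule const_path[OF NS N1S])
          done
      next
        case False
        then obtain p n where p: "p \<in> paths NI N1" "p z = x1" "(p n, q m) \<in> ZN" "((q, m), (p, n)) \<in> Z2"
          using c5[OF r q(1,2)] by blast
        have x2f: "sat N2 NI le z V2 x2 f" using qf q(2) False lez unfolding lt_def by metis
        have "\<forall>i. le z i \<and> lt le i n \<longrightarrow> sat N1 NI le z V1 (p i) f"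
        proof (intro allI impI)
          fix i assume i: "le z i \<and> lt le i n"
          show "sat N1 NI le z V1 (p i) f"
          proof (cases "i = z")
            case True then show ?thesis using x2f p r Pass.IH(1) by auto
          next
            case False
            then obtain kq where "lt le z kq" "lt le kq m" "(p i, q kq) \<in> ZN"
              using c7[OF p(4)] i unfolding lt_def by blast
            then show ?thesis using qf Pass.IH(1) unfolding lt_def by blast
          qed
        qed
        then show ?thesis using q p Pass.IH(2) r unfolding sat.simps by blast
      qed
    qed
  qed
qed

theorem theorem17:
  fixes N1 :: "'a \<Rightarrow> 'a set set" and V1 :: "'a \<Rightarrow> 'p::countable set"
    and N2 :: "'b \<Rightarrow> 'b set set" and V2 :: "'b \<Rightarrow> 'p set"
    and NI :: "'i \<Rightarrow> 'i set set" and le :: "'i \<Rightarrow> 'i \<Rightarrow> bool" and z :: 'i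
    and ZN :: "('a \<times> 'b) set"
    and Z1 :: "((('i \<Rightarrow> 'a) \<times> 'i) \<times> (('i \<Rightarrow> 'b) \<times> 'i)) set"
    and Z2 :: "((('i \<Rightarrow> 'b) \<times> 'i) \<times> (('i \<Rightarrow> 'a) \<times> 'i)) set"
    and \<phi> :: "'p form"
  assumes "nbhd_space N1" and "nbhd_space N2" and "index_space NI le z"
    and "path_pres_bisim N1 V1 N2 V2 NI le z ZN Z1 Z2"
    and "(x1, x2) \<in> ZN"
  shows "sat N1 NI le z V1 x1 \<phi> \<longleftrightarrow> sat N2 NI le z V2 x2 \<phi>"
  using main[OF assms(1-4)] assms(5) by blast

end
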